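(* Let $G$ be an antimatroid on a ground set $S$ with $|S|=n$, and for $i,j\ge0$ let $a_{i,j}$ be the number of convex sets $C$ of $G$ with $|C|=i$ and $|\mathrm{int}(C)|=j$. Then: (1) for every integer $0\le k<n$, $$\sum_{i=0}^{k}\sum_{j=0}^{k-i}(-1)^j\binom{k-i}{j}\sum_{s=i}^{n}(-1)^{s-i}\binom{s}{i}a_{s,j}=0;$$ (2) for $k=n$, $$\sum_{i=0}^{n}\sum_{j=0}^{n-i}(-1)^j\binom{n-i}{j}\sum_{s=i}^{n}(-1)^{s-i}\binom{s}{i}a_{s,j}=1.$$
   Context: An antimatroid on a finite set $S$ is a family $\mathcal{F}\subseteq 2^S$ of feasible sets with $\emptyset\in\mathcal{F}$, $S\in\mathcal{F}$, closed under union, and accessible: every nonempty $F\in\mathcal{F}$ contains some $x$ with $F\setminus\{x\}\in\mathcal{F}$. A set $C$ is convex if $S\setminus C\in\mathcal{F}$; convex sets are closed under intersection, and the convex closure $\overline{A}$ of $A$ is the smallest convex set containing $A$. For convex $C$, $p\in C$ is extreme if $p\notin\overline{C\setminus\{p\}}$; $\mathrm{int}(C)$ is the set of non-extreme points of $C$. *)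

theory Defs
  imports Main
begin

definition antimatroid :: "'a set \<Rightarrow> 'a set set \<Rightarrow> bool" where
  "antimatroid S F \<longleftrightarrow> finite S \<and> F \<subseteq> Pow S \<and> {} \<in> F \<and> S \<in> F \<and>
     (\<forall>A\<in>F. \<forall>B\<in>F. A \<union> B \<in> F) \<and>
     (\<forall>A\<in>F. A \<noteq> {} \<longrightarrow> (\<exists>x\<in>A. A - {x} \<in> F))"

definition convex_set :: "'a set \<Rightarrow> 'a set set \<Rightarrow> 'a set \<Rightarrow> bool" where
  "convex_set S F C \<longleftrightarrow> C \<subseteq> S \<and> S - C \<in> F"

definition conv_closure :: "'a set \<Rightarrow> 'a set set \<Rightarrow> 'a set \<Rightarrow> 'a set" where
  "conv_closure S F A = \<Inter>{C. convex_set S F C \<and> A \<subseteq> C}"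

definition extreme_pt :: "'a set \<Rightarrow> 'a set set \<Rightarrow> 'a set \<Rightarrow> 'a \<Rightarrow> bool" where
  "extreme_pt S F C p \<longleftrightarrow> p \<in> C \<and> p \<notin> conv_closure S F (C - {p})"

definition interior_pts :: "'a set \<Rightarrow> 'a set set \<Rightarrow> 'a set \<Rightarrow> 'a set" where
  "interior_pts S F C = {p \<in> C. \<not> extreme_pt S F C p}"

definition a_count :: "'a set \<Rightarrow> 'a set set \<Rightarrow> nat \<Rightarrow> nat \<Rightarrow> nat" where
  "a_count S F i j = card {C. convex_set S F C \<and> card C = i \<and> card (interior_pts S F C) = j}"

end

theory Submission
  imports Defs
begin


lemma alt_ivl:
  assumes "finite Y" "X \<subseteq> Y"
  shows "(\<Sum>T\<in>{T. X \<subseteq> T \<and> T \<subseteq> Y}. (-1::int) ^ card T) = (if X = Y then (-1) ^ card Y else 0)"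
proof (cases "X = Y")
  case True
  then have "{T. X \<subseteq> T \<and> T \<subseteq> Y} = {Y}" by auto
  then show ?thesis using True by simp
next
  case False
  then have "X \<subset> Y" using assms by auto
  have e: "{T. X \<subseteq> T \<and> T \<subseteq> Y} = {T. T \<subseteq> Y \<and> X \<subseteq> T}" by auto
  have "(\<Sum>T\<in>{T. T \<subseteq> Y \<and> X \<subseteq> T}. (-1::int) ^ card T) = 0"
    apply (rule sum_alternating_cancels)
    using \<open>finite Y\<close> apply simp
    using card_subsupersets_even_odd[OF \<open>finite Y\<close> \<open>X \<subset> Y\<close>]
    by (simp add: conj_assoc)
  then show ?thesis using False e by simp
qed

lemma union_feasible:
  assumes "antimatroid S F" "finite G" "G \<subseteq> F"
  shows "\<Union>G \<in> F"
  using assms(2,3)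
proof (induction G rule: finite_induct)
  case empty then show ?case using assms(1) by (simp add: antimatroid_def)
next
  case (insert x G)
  then show ?case using assms(1) unfolding antimatroid_def by auto
qed

lemma augment:
  assumes am: "antimatroid S F" and X: "X \<in> F"
  shows "Y \<in> F \<Longrightarrow> \<not> Y \<subseteq> X \<Longrightarrow> \<exists>x\<in>Y - X. X \<union> {x} \<in> F"
proof (induction "card Y" arbitrary: Y rule: less_induct)
  case (less Y)
  have fin: "finite Y" using am less.prems(1) unfolding antimatroid_def by (meson Pow_iff finite_subset subsetD)
  have "Y \<noteq> {}" using less.prems by auto
  then obtain y where y: "y \<in> Y" "Y - {y} \<in> F" using am less.prems(1) unfolding antimatroid_def by blast
  show ?case
  proof (cases "Y - {y} \<subseteq> X")
    case True
    then have "y \<notin> X" using less.prems(2) by auto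
    moreover have "X \<union> {y} = X \<union> Y" using True y by auto
    moreover have "X \<union> Y \<in> F" using am X less.prems(1) unfolding antimatroid_def by blast
    ultimately show ?thesis using y by (intro bexI[of _ y]) auto
  next
    case False
    have "card (Y - {y}) < card Y" using fin y by (meson card_Diff1_less)
    from less.hyps[OF this y(2) False] show ?thesis by auto
  qed
qed

context
  fixes S :: "'a set" and F :: "'a set set"
  assumes am: "antimatroid S F"
begin

lemma finS: "finite S" using am by (simp add: antimatroid_def)

lemma S_convex: "convex_set S F S" using am by (simp add: antimatroid_def convex_set_def)

lemma cl_sub: "A \<subseteq> S \<Longrightarrow> conv_closure S F A \<subseteq> S"
  using S_convex unfolding conv_closure_def by blast

lemma cl_ext: "A \<subseteq> conv_closure S F A"
  unfolding conv_closure_def by blast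

lemma cl_least: "convex_set S F C \<Longrightarrow> A \<subseteq> C \<Longrightarrow> conv_closure S F A \<subseteq> C"
  unfolding conv_closure_def by blast

lemma cl_mono: "A \<subseteq> B \<Longrightarrow> conv_closure S F A \<subseteq> conv_closure S F B"
  unfolding conv_closure_def by blast

lemma cl_convex:
  assumes "A \<subseteq> S"
  shows "convex_set S F (conv_closure S F A)"
proof -
  let ?G = "{C. convex_set S F C \<and> A \<subseteq> C}"
  have "S \<in> ?G" using S_convex assms by auto
  have fin: "finite ((\<lambda>C. S - C) ` ?G)"
  proof -
    have "?G \<subseteq> Pow S" unfolding convex_set_def by auto
    then show ?thesis using finS by (meson finite_Pow_iff finite_imageI finite_subset)
  qed
  have "(\<lambda>C. S - C) ` ?G \<subseteq> F" unfolding convex_set_def by auto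
  from union_feasible[OF am fin this] have "\<Union>((\<lambda>C. S - C) ` ?G) \<in> F" .
  moreover have "\<Union>((\<lambda>C. S - C) ` ?G) = S - \<Inter>?G" using \<open>S \<in> ?G\<close> by auto
  moreover have "\<Inter>?G \<subseteq> S" using \<open>S \<in> ?G\<close> by blast
  ultimately show ?thesis unfolding convex_set_def conv_closure_def by simp
qed


lemma ext_sub_gen:
  assumes "A \<subseteq> S" "p \<in> conv_closure S F A" "extreme_pt S F (conv_closure S F A) p"
  shows "p \<in> A"
proof (rule ccontr)
  assume "p \<notin> A"
  then have "A \<subseteq> conv_closure S F A - {p}" using cl_ext[of A] by blast
  then have "conv_closure S F A \<subseteq> conv_closure S F (conv_closure S F A - {p})" by (rule cl_mono)
  then show False using assms(2,3) unfolding extreme_pt_def by blast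
qed

lemma krein_milman:
  assumes C: "convex_set S F C"
  shows "C \<subseteq> conv_closure S F {p\<in>C. extreme_pt S F C p}"
proof (rule ccontr)
  let ?E = "{p\<in>C. extreme_pt S F C p}"
  let ?D = "conv_closure S F ?E"
  assume "\<not> C \<subseteq> ?D"
  have CS: "C \<subseteq> S" using C by (simp add: convex_set_def)
  have ES: "?E \<subseteq> S" using CS by blast
  have Dc: "convex_set S F ?D" by (rule cl_convex[OF ES])
  have f1: "S - C \<in> F" using C by (simp add: convex_set_def)
  have f2: "S - ?D \<in> F" using Dc by (simp add: convex_set_def)
  obtain y where y: "y \<in> C" "y \<notin> ?D" using \<open>\<not> C \<subseteq> ?D\<close> by blast
  have f3: "\<not> S - ?D \<subseteq> S - C" using y CS by blast
  obtain x where x: "x \<in> (S - ?D) - (S - C)" "(S - C) \<union> {x} \<in> F"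
    using augment[OF am f1 f2 f3] by blast
  have xC: "x \<in> C" "x \<notin> ?D" using x by auto
  have eq: "S - (C - {x}) = (S - C) \<union> {x}" using xC CS by blast
  have "C - {x} \<subseteq> S" using CS by blast
  moreover have "S - (C - {x}) \<in> F" unfolding eq by (rule x(2))
  ultimately have "convex_set S F (C - {x})" by (simp add: convex_set_def)
  then have "conv_closure S F (C - {x}) \<subseteq> C - {x}" using cl_least by blast
  then have "x \<notin> conv_closure S F (C - {x})" by blast
  then have "extreme_pt S F C x" using xC unfolding extreme_pt_def by blast
  then have "x \<in> ?E" using xC by blast
  moreover have "?E \<subseteq> ?D" by (rule cl_ext)
  ultimately have "x \<in> ?D" by blast
  then show False using xC by blast
qed

lemma fiber:
  assumes C: "convex_set S F C"
  shows "{A. A \<subseteq> S \<and> conv_closure S F A = C} = {A. {p\<in>C. extreme_pt S F C p} \<subseteq> A \<and> A \<subseteq> C}"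
proof (rule set_eqI, rule iffI)
  fix A assume "A \<in> {A. A \<subseteq> S \<and> conv_closure S F A = C}"
  then have A: "A \<subseteq> S" "conv_closure S F A = C" by auto
  have "{p\<in>C. extreme_pt S F C p} \<subseteq> A"
  proof
    fix p assume "p \<in> {p\<in>C. extreme_pt S F C p}"
    then have "p \<in> conv_closure S F A" "extreme_pt S F (conv_closure S F A) p" using A(2) by auto
    then show "p \<in> A" by (rule ext_sub_gen[OF A(1)])
  qed
  moreover have "A \<subseteq> C" using cl_ext[of A] A(2) by simp
  ultimately show "A \<in> {A. {p\<in>C. extreme_pt S F C p} \<subseteq> A \<and> A \<subseteq> C}" by simp
next
  fix A assume "A \<in> {A. {p\<in>C. extreme_pt S F C p} \<subseteq> A \<and> A \<subseteq> C}"
  then have A: "{p\<in>C. extreme_pt S F C p} \<subseteq> A" "A \<subseteq> C" by auto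
  have CS: "C \<subseteq> S" using C by (simp add: convex_set_def)
  have "conv_closure S F A = C"
  proof
    show "conv_closure S F A \<subseteq> C" using cl_least[OF C A(2)] .
    show "C \<subseteq> conv_closure S F A" using krein_milman[OF C] cl_mono[OF A(1)] by (rule subset_trans)
  qed
  moreover have "A \<subseteq> S" using A(2) CS by (rule subset_trans)
  ultimately show "A \<in> {A. A \<subseteq> S \<and> conv_closure S F A = C}" by simp
qed

end


definition H :: "nat \<Rightarrow> nat \<Rightarrow> nat \<Rightarrow> int" where
  "H s j k = (\<Sum>i=0..k. (-1)^i * int (s choose i) * int ((k-i) choose j))"

lemma H_s: "H (Suc s) j (Suc k) = H s j (Suc k) - H s j k"
proof -
  have "H (Suc s) j (Suc k) = int (k+1 choose j) + (\<Sum>i=0..k. (-1)^(Suc i) * int (Suc s choose Suc i) * int ((k-i) choose j))"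
    unfolding H_def by (subst sum.atLeast0_atMost_Suc_shift) simp
  also have "\<dots> = int (k+1 choose j) + (\<Sum>i=0..k. (-1)^(Suc i) * int (s choose Suc i) * int ((k-i) choose j))
        + (\<Sum>i=0..k. (-1)^(Suc i) * int (s choose i) * int ((k-i) choose j))"
  proof -
    have "(\<Sum>i=0..k. (-1)^(Suc i) * int (Suc s choose Suc i) * int ((k-i) choose j)) =
      (\<Sum>i=0..k. (-1)^(Suc i) * int (s choose Suc i) * int ((k-i) choose j)
        + (-1)^(Suc i) * int (s choose i) * int ((k-i) choose j))"
      by (rule sum.cong) (simp_all add: algebra_simps)
    then show ?thesis by (simp only: sum.distrib add.assoc)
  qed
  also have "(\<Sum>i=0..k. (-1)^(Suc i) * int (s choose i) * int ((k-i) choose j)) = - H s j k"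
    unfolding H_def by (simp add: sum_negf[symmetric])
  also have "int (k+1 choose j) + (\<Sum>i=0..k. (-1)^(Suc i) * int (s choose Suc i) * int ((k-i) choose j)) = H s j (Suc k)"
    unfolding H_def by (subst sum.atLeast0_atMost_Suc_shift) simp
  finally show ?thesis by simp
qed

lemma H_j: "H s (Suc j) (Suc k) = H s j k + H s (Suc j) k"
proof -
  have "H s (Suc j) (Suc k) = (\<Sum>i=0..k. (-1)^i * int (s choose i) * int ((Suc k-i) choose Suc j))"
    unfolding H_def by simp
  also have "\<dots> = (\<Sum>i=0..k. (-1)^i * int (s choose i) * int ((k-i) choose j)
                 + (-1)^i * int (s choose i) * int ((k-i) choose Suc j))"
    by (rule sum.cong) (auto simp: Suc_diff_le algebra_simps)
  finally show ?thesis unfolding H_def by (simp add: sum.distrib)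
qed

lemma H_ss: "H (Suc s) (Suc j) (Suc k) = H s j k"
  using H_s[of s "Suc j" k] H_j[of s j k] by simp

lemma H_0: "H s (Suc j) 0 = 0"
  unfolding H_def by simp

definition R :: "nat \<Rightarrow> nat \<Rightarrow> nat \<Rightarrow> int" where
  "R e j k = (\<Sum>r\<in>{r. r \<le> e \<and> r + j \<le> k}. (-1)^(e-r) * int (e choose r))"

lemma neg1_diff: "r \<le> e \<Longrightarrow> (-1::int)^(e-r) = (-1)^e * (-1)^r"
proof -
  assume "r \<le> e"
  then have "(-1::int)^e = (-1)^(e-r) * (-1)^r" by (simp flip: power_add)
  then have "(-1::int)^e * (-1)^r = (-1)^(e-r) * ((-1)^r * (-1)^r)" by simp
  also have "(-1::int)^r * (-1)^r = 1" by (simp flip: power_add)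
  finally show ?thesis by simp
qed

lemma HR: "(-1)^e * H (e+j) j k = R e j k"
proof (induction j arbitrary: k)
  case 0
  have "(-1)^e * H e 0 k = (\<Sum>i=0..k. (if i \<le> e then (-1)^(e-i) * int (e choose i) else 0))"
    unfolding H_def sum_distrib_left
    by (rule sum.cong) (auto simp: neg1_diff)
  also have "\<dots> = (\<Sum>i\<in>{i\<in>{0..k}. i \<le> e}. (-1)^(e-i) * int (e choose i))"
    by (subst sum.inter_filter) auto
  also have "{i\<in>{0..k}. i \<le> e} = {r. r \<le> e \<and> r + 0 \<le> k}" by auto
  finally show ?case unfolding R_def by simp
next
  case (Suc j)
  show ?case
  proof (cases k)
    case 0
    then show ?thesis unfolding R_def by (simp add: H_0)
  next
    case (Suc k')
    have "H (e + Suc j) (Suc j) k = H (e+j) j k'" using H_ss Suc by simp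
    moreover have "R e (Suc j) k = R e j k'" unfolding R_def Suc by simp
    ultimately show ?thesis using Suc.IH by simp
  qed
qed

lemma aux1: "(x::int) * x = 1 \<Longrightarrow> x * (y * x * z) = y * z"
proof -
  assume h: "x * x = 1"
  have "x * (y * x * z) = (x * x) * (y * z)" by (simp add: mult_ac)
  then show ?thesis using h by simp
qed

lemma aux2: "(a::int) * b = c * d \<Longrightarrow> a * x * (b * y) = c * (d * y * x)"
proof -
  assume h: "a * b = c * d"
  have "a * x * (b * y) = (a * b) * (x * y)" by (simp add: mult_ac)
  also have "\<dots> = (c * d) * (x * y)" using h by simp
  also have "\<dots> = c * (d * y * x)" by (simp add: mult_ac)
  finally show ?thesis .
qed

lemma V_eq:
  "(\<Sum>i=0..k. (-1::int)^j * int ((k-i) choose j) * ((-1)^(e+j-i) * int ((e+j) choose i))) = R e j k"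
proof -
  have "(\<Sum>i=0..k. (-1::int)^j * int ((k-i) choose j) * ((-1)^(e+j-i) * int ((e+j) choose i)))
     = (-1)^e * H (e+j) j k"
    unfolding H_def sum_distrib_left
  proof (rule sum.cong)
    fix i assume "i \<in> {0..k}"
    show "(-1::int)^j * int ((k-i) choose j) * ((-1)^(e+j-i) * int ((e+j) choose i))
        = (-1)^e * ((-1)^i * int ((e+j) choose i) * int ((k-i) choose j))"
    proof (cases "i \<le> e+j")
      case True
      have ej: "(-1::int)^(e+j) = (-1)^e * (-1)^j" by (simp add: power_add)
      have jj: "(-1::int)^j * (-1)^j = 1" by (simp flip: power_add)
      have "(-1::int)^j * (-1)^(e+j-i) = (-1)^j * ((-1)^e * (-1)^j * (-1)^i)"
        by (simp only: neg1_diff[OF True] ej)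
      also have "\<dots> = (-1)^e * (-1)^i" by (rule aux1[OF jj])
      finally have key: "(-1::int)^j * (-1)^(e+j-i) = (-1)^e * (-1)^i" .
      show ?thesis using aux2[OF key] .
    qed simp
  qed simp
  then show ?thesis using HR by simp
qed



definition W :: "nat \<Rightarrow> 'a set \<Rightarrow> int" where
  "W k A = (\<Sum>B\<in>{B. B \<subseteq> A \<and> card B \<le> k}. (-1)^card B * (-1)^card A)"

lemma key:
  assumes fin: "finite Y" and XY: "X \<subseteq> Y"
  shows "(\<Sum>A\<in>{A. X \<subseteq> A \<and> A \<subseteq> Y}. W k A)
       = (\<Sum>B\<in>{B. B \<subseteq> Y \<and> card B \<le> k \<and> X \<union> B = Y}. (-1)^card B * (-1)^card Y)"
proof -
  let ?I = "{A. X \<subseteq> A \<and> A \<subseteq> Y}"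
  let ?Sm = "{B. B \<subseteq> Y \<and> card B \<le> k}"
  have finI: "finite ?I" by (rule finite_subset[of _ "Pow Y"]) (use fin in auto)
  have finSm: "finite ?Sm" by (rule finite_subset[of _ "Pow Y"]) (use fin in auto)
  have "(\<Sum>A\<in>?I. W k A) = (\<Sum>A\<in>?I. \<Sum>B\<in>{B. B \<in> ?Sm \<and> B \<subseteq> A}. (-1::int)^card B * (-1)^card A)"
    unfolding W_def
  proof (rule sum.cong)
    fix A assume "A \<in> ?I"
    then have "{B. B \<subseteq> A \<and> card B \<le> k} = {B. B \<in> ?Sm \<and> B \<subseteq> A}" by auto
    then show "(\<Sum>B\<in>{B. B \<subseteq> A \<and> card B \<le> k}. (-1::int)^card B * (-1)^card A) = (\<Sum>B\<in>{B. B \<in> ?Sm \<and> B \<subseteq> A}. (-1::int)^card B * (-1)^card A)"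
      by simp
  qed simp
  also have "\<dots> = (\<Sum>B\<in>?Sm. \<Sum>A\<in>{A. A \<in> ?I \<and> B \<subseteq> A}. (-1::int)^card B * (-1)^card A)"
    by (rule sum.swap_restrict[OF finI finSm, where g="\<lambda>A B. (-1::int)^card B * (-1)^card A" and R="\<lambda>A B. B \<subseteq> A"])
  also have "\<dots> = (\<Sum>B\<in>?Sm. (-1)^card B * (\<Sum>A\<in>{A. X \<union> B \<subseteq> A \<and> A \<subseteq> Y}. (-1::int)^card A))"
  proof (rule sum.cong)
    fix B assume "B \<in> ?Sm"
    have "{A. A \<in> ?I \<and> B \<subseteq> A} = {A. X \<union> B \<subseteq> A \<and> A \<subseteq> Y}" by auto
    then show "(\<Sum>A\<in>{A. A \<in> ?I \<and> B \<subseteq> A}. (-1::int)^card B * (-1)^card A) = (-1)^card B * (\<Sum>A\<in>{A. X \<union> B \<subseteq> A \<and> A \<subseteq> Y}. (-1::int)^card A)"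
      by (simp add: sum_distrib_left)
  qed simp
  also have "\<dots> = (\<Sum>B\<in>?Sm. (if X \<union> B = Y then (-1)^card B * (-1)^card Y else 0))"
  proof (rule sum.cong)
    fix B assume "B \<in> ?Sm"
    then have "X \<union> B \<subseteq> Y" using XY by auto
    from alt_ivl[OF fin this] show "(-1)^card B * (\<Sum>A\<in>{A. X \<union> B \<subseteq> A \<and> A \<subseteq> Y}. (-1::int)^card A) = (if X \<union> B = Y then (-1)^card B * (-1)^card Y else 0)"
      by simp
  qed simp
  also have "\<dots> = (\<Sum>B\<in>{B. B \<in> ?Sm \<and> X \<union> B = Y}. (-1)^card B * (-1)^card Y)"
    by (rule sum.inter_filter[OF finSm, symmetric])
  also have "{B. B \<in> ?Sm \<and> X \<union> B = Y} = {B. B \<subseteq> Y \<and> card B \<le> k \<and> X \<union> B = Y}" by blast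
  finally show ?thesis .
qed

lemma per_C:
  assumes fin: "finite C" and EI: "E \<inter> I = {}" "E \<union> I = C"
  shows "(\<Sum>A\<in>{A. E \<subseteq> A \<and> A \<subseteq> C}. W k A) = R (card E) (card I) k"
proof -
  have finE: "finite E" and finI: "finite I" using fin EI by auto
  let ?P = "{B'. B' \<subseteq> E \<and> card B' + card I \<le> k}"
  have "(\<Sum>A\<in>{A. E \<subseteq> A \<and> A \<subseteq> C}. W k A)
       = (\<Sum>B\<in>{B. B \<subseteq> C \<and> card B \<le> k \<and> E \<union> B = C}. (-1)^card B * (-1)^card C)"
    using key[OF fin, of E k] EI by auto
  also have "{B. B \<subseteq> C \<and> card B \<le> k \<and> E \<union> B = C} = (\<lambda>B'. I \<union> B') ` ?P"
  proof
    show "{B. B \<subseteq> C \<and> card B \<le> k \<and> E \<union> B = C} \<subseteq> (\<lambda>B'. I \<union> B') ` ?P"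
    proof
      fix B assume "B \<in> {B. B \<subseteq> C \<and> card B \<le> k \<and> E \<union> B = C}"
      then have B: "B \<subseteq> C" "card B \<le> k" "E \<union> B = C" by auto
      have eqB: "B = I \<union> (B \<inter> E)" using B EI by auto
      have "card (I \<union> (B \<inter> E)) = card I + card (B \<inter> E)"
        using finI finE EI by (intro card_Un_disjoint) auto
      then have "card (B \<inter> E) + card I \<le> k" using B eqB by simp
      then show "B \<in> (\<lambda>B'. I \<union> B') ` ?P" using eqB by blast
    qed
    show "(\<lambda>B'. I \<union> B') ` ?P \<subseteq> {B. B \<subseteq> C \<and> card B \<le> k \<and> E \<union> B = C}"
    proof
      fix B assume "B \<in> (\<lambda>B'. I \<union> B') ` ?P"
      then obtain B' where B': "B' \<subseteq> E" "card B' + card I \<le> k" "B = I \<union> B'" by auto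
      have "card (I \<union> B') = card I + card B'"
        using finI finE EI B' by (intro card_Un_disjoint) (auto intro: finite_subset)
      then show "B \<in> {B. B \<subseteq> C \<and> card B \<le> k \<and> E \<union> B = C}" using B' EI by auto
    qed
  qed
  also have "(\<Sum>B\<in>(\<lambda>B'. I \<union> B') ` ?P. (-1::int)^card B * (-1)^card C)
       = (\<Sum>B'\<in>?P. (-1)^card (I \<union> B') * (-1)^card C)"
  proof -
    have inj: "inj_on (\<lambda>B'. I \<union> B') ?P"
    proof (rule inj_onI)
      fix X1 X2 assume X: "X1 \<in> ?P" "X2 \<in> ?P" "I \<union> X1 = I \<union> X2"
      have "X1 = (I \<union> X1) \<inter> E" using X(1) EI by blast
      also have "\<dots> = (I \<union> X2) \<inter> E" using X(3) by simp
      also have "\<dots> = X2" using X(2) EI by blast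
      finally show "X1 = X2" .
    qed
    show ?thesis by (simp add: sum.reindex[OF inj] o_def)
  qed
  also have "\<dots> = (\<Sum>B'\<in>?P. (-1)^(card E - card B'))"
  proof (rule sum.cong)
    fix B' assume "B' \<in> ?P"
    then have B': "B' \<subseteq> E" by auto
    have fB': "finite B'" using B' finE finite_subset by auto
    have c1: "card (I \<union> B') = card I + card B'"
      using finI fB' EI B' by (intro card_Un_disjoint) auto
    have c2: "card C = card E + card I"
      using card_Un_disjoint[OF finE finI] EI by simp
    have le: "card B' \<le> card E" using B' finE card_mono by auto
    have "(-1::int)^card (I \<union> B') * (-1)^card C
          = (-1)^card E * (-1)^card B' * ((-1)^card I * (-1)^card I)"
      by (simp add: c1 c2 power_add mult_ac)
    also have "(-1::int)^card I * (-1)^card I = 1" by (simp flip: power_add)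
    finally show "(-1::int)^card (I \<union> B') * (-1)^card C = (-1)^(card E - card B')"
      using neg1_diff[OF le] by simp
  qed simp
  also have "\<dots> = (\<Sum>r\<in>{r. r \<le> card E \<and> r + card I \<le> k}. \<Sum>B'\<in>{B'. B' \<in> ?P \<and> card B' = r}. (-1::int)^(card E - card B'))"
  proof (rule sum.group[symmetric])
    show "finite ?P" by (rule finite_subset[of _ "Pow E"]) (use finE in auto)
    show "finite {r. r \<le> card E \<and> r + card I \<le> k}" by (rule finite_subset[of _ "{..card E}"]) auto
    show "card ` ?P \<subseteq> {r. r \<le> card E \<and> r + card I \<le> k}"
    proof
      fix r assume "r \<in> card ` ?P"
      then obtain B' where B': "B' \<subseteq> E" "card B' + card I \<le> k" "r = card B'" by blast
      then show "r \<in> {r. r \<le> card E \<and> r + card I \<le> k}" using card_mono[OF finE B'(1)] by simp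
    qed
  qed
  also have "\<dots> = R (card E) (card I) k"
    unfolding R_def
  proof (rule sum.cong)
    fix r assume r: "r \<in> {r. r \<le> card E \<and> r + card I \<le> k}"
    have "{B'. B' \<in> ?P \<and> card B' = r} = {B'. B' \<subseteq> E \<and> card B' = r}" using r by auto
    then show "(\<Sum>B'\<in>{B'. B' \<in> ?P \<and> card B' = r}. (-1::int)^(card E - card B')) = (-1)^(card E - r) * int (card E choose r)"
      using n_subsets[OF finE, of r] by simp
  qed simp
  finally show ?thesis .
qed



lemma delta_sum:
  fixes c :: "nat \<Rightarrow> int" and g :: "'b \<Rightarrow> int"
  assumes "finite X" "finite T"
  shows "(\<Sum>s\<in>T. c s * (\<Sum>x\<in>X. if f x = s then g x else 0)) = (\<Sum>x\<in>X. if f x \<in> T then c (f x) * g x else 0)"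
proof -
  have "(\<Sum>s\<in>T. c s * (\<Sum>x\<in>X. if f x = s then g x else 0)) = (\<Sum>s\<in>T. \<Sum>x\<in>X. c s * (if f x = s then g x else 0))"
    by (simp add: sum_distrib_left)
  also have "\<dots> = (\<Sum>x\<in>X. \<Sum>s\<in>T. c s * (if f x = s then g x else 0))"
    by (rule sum.swap)
  also have "\<dots> = (\<Sum>x\<in>X. \<Sum>s\<in>T. (if f x = s then c (f x) * g x else 0))"
    by (rule sum.cong, simp, rule sum.cong, auto)
  also have "\<dots> = (\<Sum>x\<in>X. if f x \<in> T then c (f x) * g x else 0)"
    using assms(2) by simp
  finally show ?thesis .
qed

lemma main_k:
  assumes am: "antimatroid S F" and n: "card S = n" and kn: "k \<le> n"
  shows "(\<Sum>i=0..k. \<Sum>j=0..k-i. (-1::int)^j * int ((k-i) choose j) *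
              (\<Sum>s=i..n. (-1)^(s-i) * int (s choose i) * int (a_count S F s j)))
         = (if n \<le> k then 1 else 0)"
proof -
  have finS: "finite S" using finS[OF am] .
  define Conv where "Conv = {C. convex_set S F C}"
  have ConvPow: "Conv \<subseteq> Pow S" unfolding Conv_def convex_set_def by auto
  have finConv: "finite Conv" using ConvPow finS by (meson finite_Pow_iff finite_subset)
  have cardC: "card C \<le> n" if "C \<in> Conv" for C
    using that ConvPow finS n card_mono by blast
  have a_eq: "int (a_count S F s j) = (\<Sum>C\<in>Conv. if card C = s then (if card (interior_pts S F C) = j then 1 else 0) else 0)" for s j
  proof -
    have "{C. convex_set S F C \<and> card C = s \<and> card (interior_pts S F C) = j}
        = {C\<in>Conv. card C = s \<and> card (interior_pts S F C) = j}" by (simp add: Conv_def)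
    then have "int (a_count S F s j) = (\<Sum>C\<in>{C\<in>Conv. card C = s \<and> card (interior_pts S F C) = j}. 1)"
      unfolding a_count_def by simp
    also have "\<dots> = (\<Sum>C\<in>Conv. if card C = s \<and> card (interior_pts S F C) = j then 1 else 0)"
      by (rule sum.inter_filter[OF finConv])
    also have "\<dots> = (\<Sum>C\<in>Conv. if card C = s then (if card (interior_pts S F C) = j then 1 else 0) else 0)"
      by (rule sum.cong) auto
    finally show ?thesis .
  qed
  define c where "c i s = (-1::int)^(s-i) * int (s choose i)" for i s
  define d where "d i j = (-1::int)^j * int ((k-i) choose j)" for i j
  have inner: "(\<Sum>s=i..n. (-1)^(s-i) * int (s choose i) * int (a_count S F s j))
      = (\<Sum>C\<in>Conv. if card (interior_pts S F C) = j then c i (card C) else 0)" for i j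
  proof -
    have "(\<Sum>s=i..n. (-1)^(s-i) * int (s choose i) * int (a_count S F s j))
       = (\<Sum>s\<in>{i..n}. c i s * (\<Sum>C\<in>Conv. if card C = s then (if card (interior_pts S F C) = j then 1 else 0) else 0))"
      unfolding c_def a_eq by simp
    also have "\<dots> = (\<Sum>C\<in>Conv. if card C \<in> {i..n} then c i (card C) * (if card (interior_pts S F C) = j then 1 else 0) else 0)"
      by (rule delta_sum[OF finConv]) simp
    also have "\<dots> = (\<Sum>C\<in>Conv. if card (interior_pts S F C) = j then c i (card C) else 0)"
    proof (rule sum.cong)
      fix C assume "C \<in> Conv"
      then have "card C \<le> n" by (rule cardC)
      then show "(if card C \<in> {i..n} then c i (card C) * (if card (interior_pts S F C) = j then 1 else 0) else 0)
          = (if card (interior_pts S F C) = j then c i (card C) else 0)"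
        by (auto simp: c_def)
    qed simp
    finally show ?thesis .
  qed
  have outer: "(\<Sum>j=0..k-i. (-1::int)^j * int ((k-i) choose j) *
              (\<Sum>s=i..n. (-1)^(s-i) * int (s choose i) * int (a_count S F s j)))
      = (\<Sum>C\<in>Conv. d i (card (interior_pts S F C)) * c i (card C))" for i
  proof -
    have "(\<Sum>j=0..k-i. (-1::int)^j * int ((k-i) choose j) *
              (\<Sum>s=i..n. (-1)^(s-i) * int (s choose i) * int (a_count S F s j)))
        = (\<Sum>j\<in>{0..k-i}. d i j * (\<Sum>C\<in>Conv. if card (interior_pts S F C) = j then c i (card C) else 0))"
      unfolding inner d_def by simp
    also have "\<dots> = (\<Sum>C\<in>Conv. if card (interior_pts S F C) \<in> {0..k-i} then d i (card (interior_pts S F C)) * c i (card C) else 0)"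
      by (rule delta_sum[OF finConv]) simp
    also have "\<dots> = (\<Sum>C\<in>Conv. d i (card (interior_pts S F C)) * c i (card C))"
      by (rule sum.cong) (auto simp: d_def)
    finally show ?thesis .
  qed
  let ?E = "\<lambda>C. {p\<in>C. extreme_pt S F C p}"
  have perC: "(\<Sum>i=0..k. d i (card (interior_pts S F C)) * c i (card C))
      = (\<Sum>A\<in>{A. A \<subseteq> S \<and> conv_closure S F A = C}. W k A)" if C: "C \<in> Conv" for C
  proof -
    have cvx: "convex_set S F C" using C Conv_def by simp
    have CS: "C \<subseteq> S" using C ConvPow by blast
    have finC: "finite C" using finite_subset[OF CS finS] .
    have EI: "?E C \<inter> interior_pts S F C = {}" "?E C \<union> interior_pts S F C = C"
      unfolding interior_pts_def by auto
    have cc: "card C = card (?E C) + card (interior_pts S F C)"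
    proof -
      have f1: "finite (?E C)" using finC by simp
      have f2: "finite (interior_pts S F C)" using finC unfolding interior_pts_def by simp
      show ?thesis using card_Un_disjoint[OF f1 f2 EI(1)] EI(2) by simp
    qed
    have "(\<Sum>i=0..k. d i (card (interior_pts S F C)) * c i (card C))
        = R (card (?E C)) (card (interior_pts S F C)) k"
      unfolding c_def d_def cc by (rule V_eq)
    also have "\<dots> = (\<Sum>A\<in>{A. ?E C \<subseteq> A \<and> A \<subseteq> C}. W k A)"
      by (rule per_C[OF finC EI, symmetric])
    also have "{A. ?E C \<subseteq> A \<and> A \<subseteq> C} = {A. A \<subseteq> S \<and> conv_closure S F A = C}"
      by (rule fiber[OF am cvx, symmetric])
    finally show ?thesis .
  qed
  have "(\<Sum>i=0..k. \<Sum>j=0..k-i. (-1::int)^j * int ((k-i) choose j) *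
              (\<Sum>s=i..n. (-1)^(s-i) * int (s choose i) * int (a_count S F s j)))
      = (\<Sum>i=0..k. \<Sum>C\<in>Conv. d i (card (interior_pts S F C)) * c i (card C))"
    unfolding outer ..
  also have "\<dots> = (\<Sum>C\<in>Conv. \<Sum>i=0..k. d i (card (interior_pts S F C)) * c i (card C))"
    by (rule sum.swap)
  also have "\<dots> = (\<Sum>C\<in>Conv. \<Sum>A\<in>{A. A \<subseteq> S \<and> conv_closure S F A = C}. W k A)"
    by (rule sum.cong) (simp_all add: perC)
  also have "\<dots> = (\<Sum>A\<in>Pow S. W k A)"
  proof -
    have "(\<Sum>C\<in>Conv. \<Sum>A\<in>{A. A \<in> Pow S \<and> conv_closure S F A = C}. W k A) = (\<Sum>A\<in>Pow S. W k A)"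
    proof (rule sum.group)
      show "finite (Pow S)" using finS by simp
      show "finite Conv" by (rule finConv)
      show "conv_closure S F ` Pow S \<subseteq> Conv" unfolding Conv_def using cl_convex[OF am] by auto
    qed
    then show ?thesis by simp
  qed
  also have "\<dots> = (\<Sum>A\<in>{A. {} \<subseteq> A \<and> A \<subseteq> S}. W k A)" by (simp add: Pow_def)
  also have "\<dots> = (\<Sum>B\<in>{B. B \<subseteq> S \<and> card B \<le> k \<and> {} \<union> B = S}. (-1)^card B * (-1)^card S)"
    by (rule key[OF finS]) simp
  also have "{B. B \<subseteq> S \<and> card B \<le> k \<and> {} \<union> B = S} = (if n \<le> k then {S} else {})"
    using n by auto
  also have "(\<Sum>B\<in>(if n \<le> k then {S} else {}). (-1::int)^card B * (-1)^card S) = (if n \<le> k then 1 else 0)"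
    by (simp flip: power_add)
  finally show ?thesis .
qed

theorem corollary4p4:
  fixes S :: "'a set" and F :: "'a set set" and n :: nat
  assumes "antimatroid S F" and "card S = n"
  shows "(\<forall>k::nat. k < n \<longrightarrow>
           (\<Sum>i=0..k. \<Sum>j=0..k-i. (-1::int)^j * int ((k-i) choose j) *
              (\<Sum>s=i..n. (-1)^(s-i) * int (s choose i) * int (a_count S F s j))) = 0)
       \<and> (\<Sum>i=0..n. \<Sum>j=0..n-i. (-1::int)^j * int ((n-i) choose j) *
              (\<Sum>s=i..n. (-1)^(s-i) * int (s choose i) * int (a_count S F s j))) = 1"
  using main_k[OF assms] by simp


end
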